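(* Let $\alpha\neq0$, let $m$ be a positive integer and $u\in\{0,1,\dots,m\}$. Then $$\Lambda'(u|\mu)\,\Lambda'(u-1|\mu)\cdots\Lambda'(u-m+1|\mu)=(-\alpha)^{-m}\,\Delta_-^{u}\,(\mu_2-\mu_1z)^m\,\Delta_-^{m-u}$$ as operators on $\mathbb{C}[\mu_1,\mu_2][z]$.
   Context: $\mu_1,\mu_2$ are commuting indeterminates, commuting with $z$ and with $\Delta_\pm$; $z$ acts by multiplication; $[\Delta_\pm f](z)=\tfrac12\big(f(z+\alpha)\pm f(z-\alpha)\big)$ (acting in the variable $z$). For $u\in\mathbb{C}$, $\Lambda'(u|\mu)=-\alpha^{-1}\big[(\mu_2-\mu_1z)\Delta_--\alpha u\,\mu_1\Delta_+\big]$. *)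

theory Defs
  imports Complex_Main "HOL-Computational_Algebra.Polynomial"
begin

text \<open>Coefficient ring C[mu1,mu2], realised as nested univariate polynomials:
  the outer variable is mu2, the inner one mu1. Operators act on Rpoly = C[mu1,mu2][z].\<close>

type_synonym R = "complex poly poly"

definition cst :: "complex \<Rightarrow> R" where
  "cst a = [:[:a:]:]"

definition mu1 :: R where
  "mu1 = [:[:0, 1:]:]"

definition mu2 :: R where
  "mu2 = [:0, 1:]"

definition zshift :: "complex \<Rightarrow> R poly \<Rightarrow> R poly" where
  "zshift a f = pcompose f [:cst a, 1:]"

definition Dminus :: "complex \<Rightarrow> R poly \<Rightarrow> R poly" where
  "Dminus \<alpha> f = smult (cst (1/2)) (zshift \<alpha> f - zshift (-\<alpha>) f)"

definition Dplus :: "complex \<Rightarrow> R poly \<Rightarrow> R poly" where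
  "Dplus \<alpha> f = smult (cst (1/2)) (zshift \<alpha> f + zshift (-\<alpha>) f)"

definition Lambda' :: "complex \<Rightarrow> complex \<Rightarrow> R poly \<Rightarrow> R poly" where
  "Lambda' \<alpha> u f = smult (cst (- inverse \<alpha>))
      ([:mu2, - mu1:] * Dminus \<alpha> f - smult (cst (\<alpha> * u) * mu1) (Dplus \<alpha> f))"

fun LamProd :: "complex \<Rightarrow> complex \<Rightarrow> nat \<Rightarrow> R poly \<Rightarrow> R poly" where
  "LamProd \<alpha> u 0 = id"
| "LamProd \<alpha> u (Suc k) = Lambda' \<alpha> u \<circ> LamProd \<alpha> (u - 1) k"

end

theory Submission
  imports Defs
begin

abbreviation W :: "R poly" where "W \<equiv> [:mu2, - mu1:]"

lemma cst_mult: "cst a * cst b = cst (a*b)" by (simp add: cst_def)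
lemma cst_add: "cst a + cst b = cst (a+b)" by (simp add: cst_def)
lemma cst_0[simp]: "cst 0 = 0" by (simp add: cst_def)
lemma cst_1[simp]: "cst 1 = 1" by (simp add: cst_def one_pCons)
lemma cst_minus: "cst (-a) = - cst a" by (simp add: cst_def)

lemma zshift_add: "zshift a (f+g) = zshift a f + zshift a g"
  by (simp add: zshift_def pcompose_add)
lemma zshift_diff: "zshift a (f-g) = zshift a f - zshift a g"
  by (simp add: zshift_def pcompose_diff)
lemma zshift_smult: "zshift a (smult c f) = smult c (zshift a f)"
  by (simp add: zshift_def pcompose_smult)
lemma zshift_mult: "zshift a (f*g) = zshift a f * zshift a g"
  by (simp add: zshift_def pcompose_mult)
lemma zshift_zshift: "zshift a (zshift b f) = zshift (a+b) f"
proof -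
  have "pcompose [:cst b, 1:] [:cst a, 1:] = [:cst (a+b), 1:]"
    by (simp add: pcompose_pCons cst_add[symmetric] algebra_simps)
  thus ?thesis unfolding zshift_def by (simp add: pcompose_assoc[symmetric])
qed
lemma zshift_W: "zshift a W = W - [:cst a * mu1:]"
  by (simp add: zshift_def pcompose_pCons algebra_simps)
lemma zshift_Wmult: "zshift a (W*h) = W * zshift a h - smult (cst a * mu1) (zshift a h)"
proof -
  have "zshift a (W*h) = (W - [:cst a * mu1:]) * zshift a h"
    by (simp only: zshift_mult zshift_W)
  also have "\<dots> = W * zshift a h - smult (cst a * mu1) (zshift a h)"
    proof -
    have "[:cst a * mu1:] * zshift a h = smult (cst a * mu1) (zshift a h)" by simp
    thus ?thesis by (simp only: left_diff_distrib)
  qed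
  finally show ?thesis .
qed

lemma cst_mult_mu1_neg: "cst (-a) * mu1 = - (cst a * mu1)" by (simp add: cst_minus)

lemma Dminus_Wmult: "Dminus al (W*h) = W * Dminus al h - smult (cst al * mu1) (Dplus al h)"
  unfolding Dminus_def Dplus_def zshift_Wmult cst_mult_mu1_neg
  by (simp add: algebra_simps smult_add_right smult_diff_right del: mult_pCons_left)

lemma Dminus_add: "Dminus al (f+g) = Dminus al f + Dminus al g"
  unfolding Dminus_def by (simp add: zshift_add smult_add_right smult_diff_right algebra_simps)
lemma Dminus_diff: "Dminus al (f-g) = Dminus al f - Dminus al g"
  unfolding Dminus_def by (simp add: zshift_diff smult_add_right smult_diff_right algebra_simps)
lemma Dminus_smult: "Dminus al (smult c f) = smult c (Dminus al f)"
  unfolding Dminus_def by (simp add: zshift_smult smult_add_right smult_diff_right mult.commute)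
lemma Dminus_0: "Dminus al 0 = 0"
  unfolding Dminus_def zshift_def by simp
lemma Dplus_smult: "Dplus al (smult c f) = smult c (Dplus al f)"
  unfolding Dplus_def by (simp add: zshift_smult smult_add_right smult_diff_right mult.commute)
lemma Dminus_Dplus: "Dminus al (Dplus al f) = Dplus al (Dminus al f)"
  unfolding Dminus_def Dplus_def
  by (simp add: zshift_smult zshift_add zshift_diff zshift_zshift smult_add_right smult_diff_right algebra_simps)

lemma iter_smult: "(Dminus al ^^ j) (smult c f) = smult c ((Dminus al ^^ j) f)"
  by (induction j) (simp_all add: Dminus_smult)
lemma iter_add: "(Dminus al ^^ j) (f+g) = (Dminus al ^^ j) f + (Dminus al ^^ j) g"
  by (induction j) (simp_all add: Dminus_add)
lemma iter_diff: "(Dminus al ^^ j) (f-g) = (Dminus al ^^ j) f - (Dminus al ^^ j) g"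
  by (induction j) (simp_all add: Dminus_diff)
lemma iter_Dplus: "(Dminus al ^^ j) (Dplus al f) = Dplus al ((Dminus al ^^ j) f)"
  by (induction j) (simp_all add: Dminus_Dplus)
lemma iter_Dminus: "(Dminus al ^^ j) (Dminus al f) = (Dminus al ^^ Suc j) f"
  by (simp add: funpow_swap1)

lemma leibniz: "(Dminus al ^^ Suc j) (W*h) = W * (Dminus al ^^ Suc j) h
   - smult (cst (of_nat (Suc j) * al) * mu1) (Dplus al ((Dminus al ^^ j) h))"
proof (induction j)
  case 0
  then show ?case by (simp add: Dminus_Wmult del: mult_pCons_left)
next
  case (Suc j)
  have "(Dminus al ^^ Suc (Suc j)) (W*h) = Dminus al ((Dminus al ^^ Suc j) (W*h))" by simp
  also have "\<dots> = Dminus al (W * (Dminus al ^^ Suc j) h)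
     - smult (cst (of_nat (Suc j) * al) * mu1) (Dplus al ((Dminus al ^^ Suc j) h))"
    by (subst Suc.IH) (simp only: Dminus_diff Dminus_smult Dminus_Dplus funpow.simps comp_apply)
  also have "\<dots> = W * (Dminus al ^^ Suc (Suc j)) h - smult (cst al * mu1) (Dplus al ((Dminus al ^^ Suc j) h))
     - smult (cst (of_nat (Suc j) * al) * mu1) (Dplus al ((Dminus al ^^ Suc j) h))"
    by (simp only: Dminus_Wmult funpow.simps comp_apply)
  also have "\<dots> = W * (Dminus al ^^ Suc (Suc j)) h
     - smult (cst (of_nat (Suc (Suc j)) * al) * mu1) (Dplus al ((Dminus al ^^ Suc j) h))"
  proof -
    have "cst (of_nat (Suc (Suc j)) * al) * mu1 = cst al * mu1 + cst (of_nat (Suc j) * al) * mu1"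
    proof -
      have e: "of_nat (Suc (Suc j)) * al = al + of_nat (Suc j)*al" by (simp add: algebra_simps)
      show ?thesis by (simp only: e cst_add[symmetric] distrib_right)
    qed
    thus ?thesis by (simp add: smult_add_left del: mult_pCons_left)
  qed
  finally show ?case .
qed


lemma LamProd_snoc: "LamProd al u (Suc k) = LamProd al u k \<circ> Lambda' al (u - of_nat k)"
proof (induction k arbitrary: u)
  case 0
  then show ?case by simp
next
  case (Suc k)
  have "LamProd al u (Suc (Suc k)) = Lambda' al u \<circ> LamProd al (u-1) (Suc k)"
    by (simp only: LamProd.simps)
  also have "\<dots> = Lambda' al u \<circ> (LamProd al (u-1) k \<circ> Lambda' al (u - 1 - of_nat k))"
    by (simp only: Suc.IH)
  also have "u - 1 - of_nat k = u - of_nat (Suc k)" by (simp add: algebra_simps)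
  finally show ?case by (simp add: comp_assoc)
qed

lemma Lambda'_smult: "Lambda' al u (smult c f) = smult c (Lambda' al u f)"
  unfolding Lambda'_def Dminus_smult Dplus_smult
  by (simp only: mult_smult_right mult_smult_left smult_diff_right smult_smult mult.commute mult.left_commute)

lemma diag: "LamProd al (of_nat m) m f = smult (cst (inverse ((-al)^m))) ((Dminus al ^^ m) (W^m * f))"
proof (induction m arbitrary: f)
  case 0
  then show ?case by simp
next
  case (Suc m)
  define h where "h = W^m * f"
  have "LamProd al (of_nat (Suc m)) (Suc m) f = Lambda' al (of_nat (Suc m)) (LamProd al (of_nat m) m f)"
    by simp
  also have "\<dots> = smult (cst (inverse ((-al)^m))) (Lambda' al (of_nat (Suc m)) ((Dminus al ^^ m) h))"
    by (simp only: Suc.IH Lambda'_smult h_def)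
  also have "Lambda' al (of_nat (Suc m)) ((Dminus al ^^ m) h) = smult (cst (- inverse al)) ((Dminus al ^^ Suc m) (W*h))"
    unfolding Lambda'_def leibniz by (simp add: mult.commute del: mult_pCons_left)
  finally have "LamProd al (of_nat (Suc m)) (Suc m) f =
     smult (cst (inverse ((-al)^m)) * cst (- inverse al)) ((Dminus al ^^ Suc m) (W*h))" by simp
  also have "cst (inverse ((-al)^m)) * cst (- inverse al) = cst (inverse ((-al)^Suc m))"
    by (simp add: cst_mult mult.commute)
  also have "W*h = W^Suc m * f" by (simp add: h_def mult.assoc del: mult_pCons_left)
  finally show ?case .
qed

lemma keyK: "(Dminus al ^^ d) (Lambda' al (- of_nat d) f) = smult (cst (- inverse al)) (W * (Dminus al ^^ Suc d) f)"
proof (cases d)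
  case 0
  then show ?thesis by (simp add: Lambda'_def del: mult_pCons_left)
next
  case (Suc i)
  have c: "cst (al * - of_nat (Suc i)) * mu1 = - (cst (of_nat (Suc i) * al) * mu1)"
  proof -
    have "al * - of_nat (Suc i) = - (of_nat (Suc i) * al)" by (simp add: algebra_simps)
    thus ?thesis by (simp only: cst_minus mult_minus_left)
  qed
  show ?thesis
    unfolding Lambda'_def iter_smult iter_diff Suc leibniz iter_Dplus c iter_Dminus
    by (simp add: Suc del: mult_pCons_left)
qed

lemma general: "LamProd al (of_nat u) (u+d) f =
   smult (cst (inverse ((-al)^(u+d)))) ((Dminus al ^^ u) (W^(u+d) * (Dminus al ^^ d) f))"
proof (induction d arbitrary: f)
  case 0
  then show ?case by (simp add: diag)
next
  case (Suc d)
  have e: "of_nat u - of_nat (u+d) = - (of_nat d::complex)" by simp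
  have "LamProd al (of_nat u) (u + Suc d) f = (LamProd al (of_nat u) (u+d) \<circ> Lambda' al (of_nat u - of_nat (u+d))) f"
    by (simp only: add_Suc_right LamProd_snoc)
  also have "\<dots> = LamProd al (of_nat u) (u+d) (Lambda' al (- of_nat d) f)"
    by (simp only: e comp_apply)
  also have "\<dots> = smult (cst (inverse ((-al)^(u+d))))
      ((Dminus al ^^ u) (W^(u+d) * smult (cst (- inverse al)) (W * (Dminus al ^^ Suc d) f)))"
    by (simp only: Suc.IH keyK)
  also have "W^(u+d) * smult (cst (- inverse al)) (W * (Dminus al ^^ Suc d) f)
     = smult (cst (- inverse al)) (W^(u + Suc d) * (Dminus al ^^ Suc d) f)"
    by (simp add: mult_smult_right mult.assoc mult.left_commute del: mult_pCons_left)
  also have "smult (cst (inverse ((-al)^(u+d)))) ((Dminus al ^^ u) (smult (cst (- inverse al)) (W^(u + Suc d) * (Dminus al ^^ Suc d) f)))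
     = smult (cst (inverse ((-al)^(u+d))) * cst (- inverse al)) ((Dminus al ^^ u) (W^(u + Suc d) * (Dminus al ^^ Suc d) f))"
    by (simp only: iter_smult smult_smult)
  also have "cst (inverse ((-al)^(u+d))) * cst (- inverse al) = cst (inverse ((-al)^(u + Suc d)))"
    by (simp add: cst_mult mult.commute)
  finally show ?case .
qed

theorem mainTheorem8:
  fixes \<alpha> :: complex and m u :: nat
  assumes "\<alpha> \<noteq> 0" and "0 < m" and "u \<le> m"
  shows "LamProd \<alpha> (of_nat u) m =
    (\<lambda>f. smult (cst (inverse ((- \<alpha>) ^ m)))
       ((Dminus \<alpha> ^^ u) ([:mu2, - mu1:] ^ m * (Dminus \<alpha> ^^ (m - u)) f)))"
proof
  fix f
  obtain d where m: "m = u + d" using assms(3) le_Suc_ex by blast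
  show "LamProd \<alpha> (of_nat u) m f = smult (cst (inverse ((- \<alpha>) ^ m)))
       ((Dminus \<alpha> ^^ u) ([:mu2, - mu1:] ^ m * (Dminus \<alpha> ^^ (m - u)) f))"
    unfolding m using general by simp
qed

end
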